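(* Let $X_0$ and $(X_t(a_{1:t}):t\in\{1,\dots,T\},a_{1:t}\in\mathcal{A}_{1:t})$ be potential outcomes with $X_t(a_{1:t})\in\mathcal{X}_t$, let $A_{1:T}$ be random actions with $A_t\in\mathcal{A}_t$, and let $(Y(a_{1:t}):a_{1:t}\in\mathcal{A}_{1:t})$ be real-valued potential outcomes defined jointly with these. Suppose for some $t\in\{1,\dots,T\}$, $a_{1:t}\in\mathcal{A}_{1:t}$, measurable $B_{0:t}=B_0\times\cdots\times B_t\subseteq\mathcal{X}_{0:t}$ and $\underline y,\overline y\in\mathbb{R}$ we have $\mathbb{P}(X_{0:t}(a_{1:t})\in B_{0:t})>0$ and $\mathbb{P}(\underline y\le Y(a_{1:t})\le\overline y\mid X_{0:t}(a_{1:t})\in B_{0:t})=1$. Let $N=\max\{0\le s\le t: A_{1:s}=a_{1:s}\}$ and $$\underline Y=\mathbb{1}(A_{1:t}=a_{1:t})Y(A_{1:t})+\mathbb{1}(A_{1:t}\ne a_{1:t})\underline y,\qquad\overline Y=\mathbb{1}(A_{1:t}=a_{1:t})Y(A_{1:t})+\mathbb{1}(A_{1:t}\ne a_{1:t})\overline y.$$ Then $$\mathbb{E}[\underline Y\mid X_{0:N}(A_{1:N})\in B_{0:N}]\le\mathbb{E}[Y(a_{1:t})\mid X_{0:t}(a_{1:t})\in B_{0:t}]\le\mathbb{E}[\overline Y\mid X_{0:N}(A_{1:N})\in B_{0:N}].$$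
   Context: Horizon $T\ge1$, $\mathcal{X}_t=\mathbb{R}^{d_t}$, finite action spaces $\mathcal{A}_t$; $z_{s:t}=(z_s,\dots,z_t)$ (empty if $s>t$), $\mathcal{X}_{0:t}=\mathcal{X}_0\times\cdots\times\mathcal{X}_t$, $X_{0:t}(a_{1:t})=(X_0,X_1(a_1),\dots,X_t(a_{1:t}))$. Quantities evaluated at the random actions, e.g. $X_{0:N}(A_{1:N})$ and $Y(A_{1:t})$, denote the potential outcome indexed by the realized actions; $X_{0:N}(A_{1:N})\in B_{0:N}$ means $X_s(A_{1:s})\in B_s$ for all $0\le s\le N$. No further causal assumptions (e.g. no unconfoundedness) are made. *)

theory Defs
  imports "HOL-Probability.Probability"
begin

definition cond_exp_event :: "'w measure \<Rightarrow> ('w \<Rightarrow> real) \<Rightarrow> 'w set \<Rightarrow> real" where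
  "cond_exp_event M Z E = (\<integral>\<omega>. indicator E \<omega> * Z \<omega> \<partial>M) / measure M E"

definition cond_prob_event :: "'w measure \<Rightarrow> 'w set \<Rightarrow> 'w set \<Rightarrow> real" where
  "cond_prob_event M F E = measure M (F \<inter> E) / measure M E"

text \<open>The state space X_t = R^{d_t}, as the Borel product measure on functions
  supported on {..<d_t}.\<close>
definition state_space :: "nat \<Rightarrow> (nat \<Rightarrow> real) measure" where
  "state_space n = PiM {..<n} (\<lambda>_. borel)"

end

theory Submission
  imports Defs
begin

theorem theorem4p4:
  fixes M :: "'w measure"
    and T :: nat
    and d :: "nat \<Rightarrow> nat"
    and Act :: "nat \<Rightarrow> 'a set"
    and X :: "nat \<Rightarrow> (nat \<Rightarrow> 'a) \<Rightarrow> 'w \<Rightarrow> (nat \<Rightarrow> real)"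
    and A :: "nat \<Rightarrow> 'w \<Rightarrow> 'a"
    and Y :: "nat \<Rightarrow> (nat \<Rightarrow> 'a) \<Rightarrow> 'w \<Rightarrow> real"
    and t :: nat
    and a :: "nat \<Rightarrow> 'a"
    and B :: "nat \<Rightarrow> (nat \<Rightarrow> real) set"
    and ylo yhi :: real
  assumes prob: "prob_space M"
    and T_pos: "T \<ge> 1"
    and Act_fin: "\<And>s. s \<in> {1..T} \<Longrightarrow> finite (Act s)"
    and Act_ne: "\<And>s. s \<in> {1..T} \<Longrightarrow> Act s \<noteq> {}"
    and X_meas: "\<And>s b. s \<le> T \<Longrightarrow> (\<forall>i\<in>{1..s}. b i \<in> Act i) \<Longrightarrow>
                   X s b \<in> M \<rightarrow>\<^sub>M state_space (d s)"
    and X_dep: "\<And>s b b'. (\<forall>i\<in>{1..s}. b i = b' i) \<Longrightarrow> X s b = X s b'"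
    and A_meas: "\<And>s. s \<in> {1..T} \<Longrightarrow> A s \<in> M \<rightarrow>\<^sub>M count_space UNIV"
    and A_val: "\<And>s \<omega>. s \<in> {1..T} \<Longrightarrow> \<omega> \<in> space M \<Longrightarrow> A s \<omega> \<in> Act s"
    and Y_meas: "\<And>s b. s \<in> {1..T} \<Longrightarrow> (\<forall>i\<in>{1..s}. b i \<in> Act i) \<Longrightarrow>
                   Y s b \<in> borel_measurable M"
    and Y_dep: "\<And>s b b'. (\<forall>i\<in>{1..s}. b i = b' i) \<Longrightarrow> Y s b = Y s b'"
    and t_range: "t \<in> {1..T}"
    and a_range: "\<And>i. i \<in> {1..t} \<Longrightarrow> a i \<in> Act i"
    and B_meas: "\<And>s. s \<le> t \<Longrightarrow> B s \<in> sets (state_space (d s))"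
    and pos: "measure M {\<omega> \<in> space M. \<forall>s\<le>t. X s a \<omega> \<in> B s} > 0"
    and bounded: "cond_prob_event M {\<omega> \<in> space M. ylo \<le> Y t a \<omega> \<and> Y t a \<omega> \<le> yhi}
                    {\<omega> \<in> space M. \<forall>s\<le>t. X s a \<omega> \<in> B s} = 1"
  shows
    "let N = (\<lambda>\<omega>. Max {s. s \<le> t \<and> (\<forall>i\<in>{1..s}. A i \<omega> = a i)});
         agree = (\<lambda>\<omega>. \<forall>i\<in>{1..t}. A i \<omega> = a i);
         Ylo = (\<lambda>\<omega>. (if agree \<omega> then Y t (\<lambda>i. A i \<omega>) \<omega> else ylo));
         Yhi = (\<lambda>\<omega>. (if agree \<omega> then Y t (\<lambda>i. A i \<omega>) \<omega> else yhi));
         EN = {\<omega> \<in> space M. \<forall>s\<le>N \<omega>. X s (\<lambda>i. A i \<omega>) \<omega> \<in> B s};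
         Ea = {\<omega> \<in> space M. \<forall>s\<le>t. X s a \<omega> \<in> B s}
     in cond_exp_event M Ylo EN \<le> cond_exp_event M (Y t a) Ea
        \<and> cond_exp_event M (Y t a) Ea \<le> cond_exp_event M Yhi EN"
proof -
  interpret P: prob_space M by (rule prob)
  have tT: "t \<le> T" "1 \<le> t" using t_range by auto
  have predA: "Measurable.pred M (\<lambda>\<omega>. A i \<omega> = a i)" if "i \<in> {1..t}" for i
  proof -
    have "A i \<in> M \<rightarrow>\<^sub>M count_space UNIV" using A_meas that tT by auto
    then have "A i -` {a i} \<inter> space M \<in> sets M" by (rule measurable_sets) auto
    moreover have "{\<omega> \<in> space M. A i \<omega> = a i} = A i -` {a i} \<inter> space M" by auto
    ultimately show ?thesis unfolding pred_def by simp
  qed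
  have predX: "Measurable.pred M (\<lambda>\<omega>. X s a \<omega> \<in> B s)" if "s \<le> t" for s
  proof -
    have "X s a \<in> M \<rightarrow>\<^sub>M state_space (d s)" using X_meas that tT a_range by auto
    then have "X s a -` B s \<inter> space M \<in> sets M" using B_meas[OF that] by (rule measurable_sets)
    moreover have "{\<omega> \<in> space M. X s a \<omega> \<in> B s} = X s a -` B s \<inter> space M" by auto
    ultimately show ?thesis unfolding pred_def by simp
  qed
  define G where "G = {\<omega>\<in>space M. \<forall>i\<in>{1..t}. A i \<omega> = a i}"
  define Ea where "Ea = {\<omega> \<in> space M. \<forall>s\<le>t. X s a \<omega> \<in> B s}"
  define EN where "EN = {\<omega>\<in>space M. \<forall>s\<le>t. (\<forall>i\<in>{1..s}. A i \<omega> = a i) \<longrightarrow> X s a \<omega> \<in> B s}"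
  define K where "K = {\<omega> \<in> space M. ylo \<le> Y t a \<omega> \<and> Y t a \<omega> \<le> yhi}"
  have Gm: "G \<in> sets M"
  proof -
    have "Measurable.pred M (\<lambda>\<omega>. \<forall>i\<in>{1..t}. A i \<omega> = a i)"
      by (rule pred_intros_finite(3)) (use predA in auto)
    then show ?thesis unfolding G_def pred_def by simp
  qed
  have Eam: "Ea \<in> sets M"
  proof -
    have "Measurable.pred M (\<lambda>\<omega>. \<forall>s\<in>{..t}. X s a \<omega> \<in> B s)"
    proof (rule pred_intros_finite(3))
      fix s assume "s \<in> {..t}"
      then show "Measurable.pred M (\<lambda>\<omega>. X s a \<omega> \<in> B s)" using predX by simp
    qed simp
    then show ?thesis unfolding pred_def Ea_def Ball_def atMost_iff .
  qed
  have ENm: "EN \<in> sets M" unfolding EN_def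
  proof -
    have "Measurable.pred M (\<lambda>\<omega>. \<forall>s\<in>{..t}. (\<forall>i\<in>{1..s}. A i \<omega> = a i) \<longrightarrow> X s a \<omega> \<in> B s)"
    proof (rule pred_intros_finite(3))
      fix s assume s: "s \<in> {..t}"
      have "Measurable.pred M (\<lambda>\<omega>. \<forall>i\<in>{1..s}. A i \<omega> = a i)"
      proof (rule pred_intros_finite(3))
        fix i assume "i \<in> {1..s}"
        then show "Measurable.pred M (\<lambda>\<omega>. A i \<omega> = a i)" using s by (intro predA) simp
      qed simp
      then show "Measurable.pred M (\<lambda>\<omega>. (\<forall>i\<in>{1..s}. A i \<omega> = a i) \<longrightarrow> X s a \<omega> \<in> B s)"
        by (rule pred_intros_logic(4)[OF _ predX]) (use s in simp_all)
    qed simp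
    then show "{\<omega>\<in>space M. \<forall>s\<le>t. (\<forall>i\<in>{1..s}. A i \<omega> = a i) \<longrightarrow> X s a \<omega> \<in> B s} \<in> sets M"
      unfolding pred_def Ball_def atMost_iff .
  qed
  have Ym: "Y t a \<in> borel_measurable M" using Y_meas t_range a_range by auto
  have Km: "K \<in> sets M" unfolding K_def using Ym by measurable
  have EaEN: "Ea \<subseteq> EN" unfolding Ea_def EN_def by auto
  have ENG: "EN \<inter> G \<subseteq> Ea" unfolding Ea_def EN_def G_def by auto
  have pa: "P.prob Ea > 0" using pos Ea_def by simp
  have pn: "P.prob Ea \<le> P.prob EN" using EaEN ENm by (intro P.finite_measure_mono) auto
  have "P.prob (K \<inter> Ea) = P.prob Ea" using bounded pa unfolding cond_prob_event_def K_def Ea_def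
    by (auto simp: field_simps)
  then have "P.prob (Ea - K) = 0"
    using P.finite_measure_Diff[OF Eam, of "K \<inter> Ea"] Km Eam by (auto simp: Diff_Int Int_commute Diff_Int_distrib2)
  then have AEK: "AE \<omega> in M. \<omega> \<in> Ea \<longrightarrow> \<omega> \<in> K"
    using Eam Km by (intro AE_I[where N="Ea - K"]) (auto simp: P.emeasure_eq_measure)
  have intEa: "integrable M (\<lambda>\<omega>. indicator Ea \<omega> * Y t a \<omega>)"
  proof (rule P.integrable_const_bound[where B="\<bar>ylo\<bar> + \<bar>yhi\<bar>"])
    show "AE \<omega> in M. norm (indicator Ea \<omega> * Y t a \<omega>) \<le> \<bar>ylo\<bar> + \<bar>yhi\<bar>"
      using AEK by eventually_elim (auto simp: K_def indicator_def)
    show "(\<lambda>\<omega>. indicator Ea \<omega> * Y t a \<omega>) \<in> borel_measurable M" using Ym Eam by measurable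
  qed
  have intEaG: "integrable M (\<lambda>\<omega>. indicator (Ea \<inter> G) \<omega> * Y t a \<omega>)"
  proof (rule P.integrable_const_bound[where B="\<bar>ylo\<bar> + \<bar>yhi\<bar>"])
    show "AE \<omega> in M. norm (indicator (Ea \<inter> G) \<omega> * Y t a \<omega>) \<le> \<bar>ylo\<bar> + \<bar>yhi\<bar>"
      using AEK by eventually_elim (auto simp: K_def indicator_def)
    show "(\<lambda>\<omega>. indicator (Ea \<inter> G) \<omega> * Y t a \<omega>) \<in> borel_measurable M" using Ym Eam Gm by measurable
  qed
  define J where "J = (\<integral>\<omega>. indicator Ea \<omega> * Y t a \<omega> \<partial>M)"
  have iI: "integrable M (indicator S :: 'w \<Rightarrow> real)" if "S \<in> sets M" for S
    using that by (intro integrable_real_indicator) (auto simp: P.emeasure_eq_measure)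
  have Jlo: "ylo * P.prob Ea \<le> J"
  proof -
    have "AE \<omega> in M. ylo * indicator Ea \<omega> \<le> indicator Ea \<omega> * Y t a \<omega>"
      using AEK by eventually_elim (auto simp: K_def indicator_def)
    then have "(\<integral>\<omega>. ylo * indicator Ea \<omega> \<partial>M) \<le> J" unfolding J_def
      using intEa Eam iI[OF Eam] by (intro integral_mono_AE) auto
    then show ?thesis using Eam by simp
  qed
  have Jhi: "J \<le> yhi * P.prob Ea"
  proof -
    have "AE \<omega> in M. indicator Ea \<omega> * Y t a \<omega> \<le> yhi * indicator Ea \<omega>"
      using AEK by eventually_elim (auto simp: K_def indicator_def)
    then have "J \<le> (\<integral>\<omega>. yhi * indicator Ea \<omega> \<partial>M)" unfolding J_def
      using intEa Eam iI[OF Eam] by (intro integral_mono_AE) auto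
    then show ?thesis using Eam by simp
  qed
  have ENeq: "{\<omega> \<in> space M. \<forall>s\<le>Max {s. s \<le> t \<and> (\<forall>i\<in>{1..s}. A i \<omega> = a i)}. X s (\<lambda>i. A i \<omega>) \<omega> \<in> B s} = EN"
  proof -
    have "(\<forall>s\<le>Max {s. s \<le> t \<and> (\<forall>i\<in>{1..s}. A i \<omega> = a i)}. X s (\<lambda>i. A i \<omega>) \<omega> \<in> B s)
      \<longleftrightarrow> (\<forall>s\<le>t. (\<forall>i\<in>{1..s}. A i \<omega> = a i) \<longrightarrow> X s a \<omega> \<in> B s)" for \<omega>
    proof -
      define S where "S = {s. s \<le> t \<and> (\<forall>i\<in>{1..s}. A i \<omega> = a i)}"
      have fS: "finite S" unfolding S_def by (rule finite_subset[of _ "{..t}"]) auto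
      have "0 \<in> S" unfolding S_def by auto
      then have MS: "Max S \<in> S" using fS by (intro Max_in) auto
      have iff: "s \<le> Max S \<longleftrightarrow> s \<le> t \<and> (\<forall>i\<in>{1..s}. A i \<omega> = a i)" for s
      proof
        assume sM: "s \<le> Max S"
        have MS2: "Max S \<le> t \<and> (\<forall>i\<in>{1..Max S}. A i \<omega> = a i)"
          using MS unfolding S_def by (rule CollectD)
        show "s \<le> t \<and> (\<forall>i\<in>{1..s}. A i \<omega> = a i)"
          using MS2 sM by auto
      next
        assume "s \<le> t \<and> (\<forall>i\<in>{1..s}. A i \<omega> = a i)"
        then have "s \<in> S" unfolding S_def by (rule CollectI)
        then show "s \<le> Max S" using fS by (intro Max_ge)
      qed
      have XA: "X s (\<lambda>i. A i \<omega>) = X s a" if "\<forall>i\<in>{1..s}. A i \<omega> = a i" for s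
        by (rule X_dep) (use that in simp)
      show ?thesis unfolding S_def[symmetric] iff using XA by auto
    qed
    then show ?thesis unfolding EN_def by auto
  qed
  define Ylo where "Ylo = (\<lambda>\<omega>. (if (\<forall>i\<in>{1..t}. A i \<omega> = a i) then Y t (\<lambda>i. A i \<omega>) \<omega> else ylo))"
  define Yhi where "Yhi = (\<lambda>\<omega>. (if (\<forall>i\<in>{1..t}. A i \<omega> = a i) then Y t (\<lambda>i. A i \<omega>) \<omega> else yhi))"
  have YA: "Y t (\<lambda>i. A i \<omega>) = Y t a" if "\<forall>i\<in>{1..t}. A i \<omega> = a i" for \<omega>
    by (rule Y_dep) (use that in simp)
  have rw: "indicator EN \<omega> * Yv \<omega> = indicator (Ea \<inter> G) \<omega> * Y t a \<omega> + c * indicator (EN - G) \<omega>"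
    if "\<omega> \<in> space M" "Yv = (\<lambda>\<omega>. (if (\<forall>i\<in>{1..t}. A i \<omega> = a i) then Y t (\<lambda>i. A i \<omega>) \<omega> else c))"
    for \<omega> Yv c
    using that YA[of \<omega>] EaEN ENG unfolding G_def by (auto simp: indicator_def)
  have intlo: "(\<integral>\<omega>. indicator EN \<omega> * Yv \<omega> \<partial>M) \<le> J + c * (P.prob EN - P.prob Ea)"
    if "Yv = (\<lambda>\<omega>. (if (\<forall>i\<in>{1..t}. A i \<omega> = a i) then Y t (\<lambda>i. A i \<omega>) \<omega> else c))" "c = ylo"
    for Yv c
  proof -
    have "(\<integral>\<omega>. indicator EN \<omega> * Yv \<omega> \<partial>M) = (\<integral>\<omega>. indicator (Ea \<inter> G) \<omega> * Y t a \<omega> + c * indicator (EN - G) \<omega> \<partial>M)"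
      using rw that(1) by (intro Bochner_Integration.integral_cong) auto
    also have "\<dots> \<le> (\<integral>\<omega>. indicator Ea \<omega> * Y t a \<omega> + c * indicator (EN - Ea) \<omega> \<partial>M)"
    proof (rule integral_mono_AE)
      show "AE \<omega> in M. indicator (Ea \<inter> G) \<omega> * Y t a \<omega> + c * indicator (EN - G) \<omega>
          \<le> indicator Ea \<omega> * Y t a \<omega> + c * indicator (EN - Ea) \<omega>"
        using AEK proof eventually_elim
        case (elim \<omega>)
        then show ?case using EaEN ENG that(2) by (cases "\<omega> \<in> G"; cases "\<omega> \<in> Ea"; cases "\<omega> \<in> EN") (auto simp: K_def)
      qed
    next
      show "integrable M (\<lambda>\<omega>. indicator (Ea \<inter> G) \<omega> * Y t a \<omega> + c * indicator (EN - G) \<omega>)"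
        using ENm Gm by (intro Bochner_Integration.integrable_add intEaG integrable_mult_right iI) auto
    next
      show "integrable M (\<lambda>\<omega>. indicator Ea \<omega> * Y t a \<omega> + c * indicator (EN - Ea) \<omega>)"
        using ENm Eam by (intro Bochner_Integration.integrable_add intEa integrable_mult_right iI) auto
    qed
    also have "\<dots> = J + c * (P.prob EN - P.prob Ea)"
      proof -
      have d: "EN - Ea \<in> sets M" using ENm Eam by auto
      have "(\<integral>\<omega>. indicator Ea \<omega> * Y t a \<omega> + c * indicator (EN - Ea) \<omega> \<partial>M)
          = J + (\<integral>\<omega>. c * indicator (EN - Ea) \<omega> \<partial>M)"
        unfolding J_def by (rule Bochner_Integration.integral_add[OF intEa integrable_mult_right[OF iI[OF d]]])
      also have "(\<integral>\<omega>. c * indicator (EN - Ea) \<omega> \<partial>M) = c * P.prob (EN - Ea)"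
        using d sets.sets_into_space[OF d] by (simp add: Int_absorb2)
      also have "P.prob (EN - Ea) = P.prob EN - P.prob Ea"
        using ENm Eam EaEN by (rule P.finite_measure_Diff)
      finally show ?thesis .
    qed
    finally show ?thesis .
  qed
  have inthi: "(\<integral>\<omega>. indicator EN \<omega> * Yv \<omega> \<partial>M) \<ge> J + c * (P.prob EN - P.prob Ea)"
    if "Yv = (\<lambda>\<omega>. (if (\<forall>i\<in>{1..t}. A i \<omega> = a i) then Y t (\<lambda>i. A i \<omega>) \<omega> else c))" "c = yhi"
    for Yv c
  proof -
    have "(\<integral>\<omega>. indicator EN \<omega> * Yv \<omega> \<partial>M) = (\<integral>\<omega>. indicator (Ea \<inter> G) \<omega> * Y t a \<omega> + c * indicator (EN - G) \<omega> \<partial>M)"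
      using rw that(1) by (intro Bochner_Integration.integral_cong) auto
    also have "\<dots> \<ge> (\<integral>\<omega>. indicator Ea \<omega> * Y t a \<omega> + c * indicator (EN - Ea) \<omega> \<partial>M)"
    proof (rule integral_mono_AE)
      show "AE \<omega> in M. indicator (Ea \<inter> G) \<omega> * Y t a \<omega> + c * indicator (EN - G) \<omega>
          \<ge> indicator Ea \<omega> * Y t a \<omega> + c * indicator (EN - Ea) \<omega>"
        using AEK proof eventually_elim
        case (elim \<omega>)
        then show ?case using EaEN ENG that(2) by (cases "\<omega> \<in> G"; cases "\<omega> \<in> Ea"; cases "\<omega> \<in> EN") (auto simp: K_def)
      qed
    next
      show "integrable M (\<lambda>\<omega>. indicator (Ea \<inter> G) \<omega> * Y t a \<omega> + c * indicator (EN - G) \<omega>)"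
        using ENm Gm by (intro Bochner_Integration.integrable_add intEaG integrable_mult_right iI) auto
    next
      show "integrable M (\<lambda>\<omega>. indicator Ea \<omega> * Y t a \<omega> + c * indicator (EN - Ea) \<omega>)"
        using ENm Eam by (intro Bochner_Integration.integrable_add intEa integrable_mult_right iI) auto
    qed
    also have "(\<integral>\<omega>. indicator Ea \<omega> * Y t a \<omega> + c * indicator (EN - Ea) \<omega> \<partial>M) = J + c * (P.prob EN - P.prob Ea)"
      proof -
      have d: "EN - Ea \<in> sets M" using ENm Eam by auto
      have "(\<integral>\<omega>. indicator Ea \<omega> * Y t a \<omega> + c * indicator (EN - Ea) \<omega> \<partial>M)
          = J + (\<integral>\<omega>. c * indicator (EN - Ea) \<omega> \<partial>M)"
        unfolding J_def by (rule Bochner_Integration.integral_add[OF intEa integrable_mult_right[OF iI[OF d]]])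
      also have "(\<integral>\<omega>. c * indicator (EN - Ea) \<omega> \<partial>M) = c * P.prob (EN - Ea)"
        using d sets.sets_into_space[OF d] by (simp add: Int_absorb2)
      also have "P.prob (EN - Ea) = P.prob EN - P.prob Ea"
        using ENm Eam EaEN by (rule P.finite_measure_Diff)
      finally show ?thesis .
    qed
    finally show ?thesis .
  qed
  have L: "cond_exp_event M Ylo EN \<le> cond_exp_event M (Y t a) Ea"
  proof -
    have pnp: "P.prob EN > 0" using pa pn by linarith
    have "ylo * P.prob Ea * (P.prob EN - P.prob Ea) \<le> J * (P.prob EN - P.prob Ea)"
      using Jlo pn by (intro mult_right_mono) auto
    then have "(J + ylo * (P.prob EN - P.prob Ea)) / P.prob EN \<le> J / P.prob Ea"
      using pa pnp by (simp add: divide_simps) (simp add: algebra_simps)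
    moreover have "(\<integral>\<omega>. indicator EN \<omega> * Ylo \<omega> \<partial>M) \<le> J + ylo * (P.prob EN - P.prob Ea)"
      by (rule intlo) (auto simp: Ylo_def)
    ultimately show ?thesis unfolding cond_exp_event_def J_def[symmetric]
      using pnp by (meson divide_right_mono less_imp_le order_trans)
  qed
  have U: "cond_exp_event M (Y t a) Ea \<le> cond_exp_event M Yhi EN"
  proof -
    have pnp: "P.prob EN > 0" using pa pn by linarith
    have "J * (P.prob EN - P.prob Ea) \<le> yhi * P.prob Ea * (P.prob EN - P.prob Ea)"
      using Jhi pn by (intro mult_right_mono) auto
    then have "J / P.prob Ea \<le> (J + yhi * (P.prob EN - P.prob Ea)) / P.prob EN"
      using pa pnp by (simp add: divide_simps) (simp add: algebra_simps)
    moreover have "(\<integral>\<omega>. indicator EN \<omega> * Yhi \<omega> \<partial>M) \<ge> J + yhi * (P.prob EN - P.prob Ea)"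
      by (rule inthi) (auto simp: Yhi_def)
    ultimately show ?thesis unfolding cond_exp_event_def J_def[symmetric]
      using pnp by (meson divide_right_mono less_imp_le order_trans)
  qed
  show ?thesis unfolding Let_def ENeq using L U unfolding Ylo_def Yhi_def Ea_def by simp
qed

end
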